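(* Let $\theta\in\mathbb{R}^q$ be constant and consider the perturbed regression $y=\phi^\top\theta+d$ with $d$ a bounded scalar signal, in CT or DT, where $\phi$ is bounded (and continuous in CT) and the unperturbed regression is identifiable, i.e. there exist $q$ time instants (positive reals in CT, nonnegative integers in DT) $\tau_1,\dots,\tau_q$ with $\mathrm{rank}[\phi(\tau_1)|\cdots|\phi(\tau_q)]=q$. Let the estimator be: in CT, $\dot{\hat\theta}_g=-\gamma_g(t)\phi\phi^\top\hat\theta_g+\gamma_g(t)\phi y$, $\hat\theta_g(0)=\theta_{g0}$, $\dot\Phi=-\gamma_g(t)\phi\phi^\top\Phi$, $\Phi(0)=I_q$, $\dot{\hat\theta}=\gamma\Delta(Y-\Delta\hat\theta)$; in DT, with $g(k)=1/(\gamma_g(k)+|\phi(k)|^2)$, $\hat\theta_g(k+1)=(I_q-g\phi\phi^\top)\hat\theta_g(k)+g\phi y(k)$, $\Phi(k+1)=(I_q-g\phi\phi^\top)\Phi(k)$, $\Phi(0)=I_q$, $\hat\theta(k+1)=\hat\theta(k)+\frac{\Delta(k)}{\gamma+\Delta^2(k)}(Y(k)-\Delta(k)\hat\theta(k))$; here $\gamma>0$, $\theta_{g0},\hat\theta(0)\in\mathbb{R}^q$ arbitrary, $\mathcal D=I_q-\Phi$, $\Delta=\det\{\mathcal D\}$, $Y=\mathrm{adj}\{\mathcal D\}(\hat\theta_g-\Phi\theta_{g0})$. Suppose the gain $\gamma_g(\cdot)>0$ (continuous in CT) satisfies $\int_0^\infty\gamma_g(t)\,dt<\infty$ in CT, respectively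 $\sum_{k=0}^\infty 1/\gamma_g(k)<\infty$ in DT. Then the parameter error $\tilde\theta:=\hat\theta-\theta$ remains bounded. *)

theory Defs
  imports "HOL-Analysis.Analysis"
begin

definition outer :: "real^'q \<Rightarrow> real^'q^'q" where
  "outer v = (\<chi> i j. v $ i * v $ j)"

text \<open>Cofactor matrix (HOL Light style): entry (i,j) is the determinant of A with
  row i replaced by the j-th unit row; this equals (-1)^(i+j) times the (i,j) minor.\<close>
definition cofactor :: "real^'q^'q \<Rightarrow> real^'q^'q" where
  "cofactor A = (\<chi> i j. det (\<chi> k l. if k = i then (if l = j then 1 else 0) else A $ k $ l))"

definition adjugate :: "real^'q^'q \<Rightarrow> real^'q^'q" where
  "adjugate A = transpose (cofactor A)"

end

theory Submission
  imports Defs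
begin


lemma outer_mult: "outer v *v x = (v \<bullet> x) *\<^sub>R v"
  by (simp add: outer_def matrix_vector_mult_def vec_eq_iff inner_vec_def sum_distrib_left algebra_simps)

lemma sum_delta_mult: "(\<Sum>x\<in>UNIV. (b::'a::finite \<Rightarrow> real) x * (if i = x then 1 else 0)) = b i"
proof -
  have "(\<Sum>x\<in>UNIV. b x * (if i = x then 1 else 0)) = (\<Sum>x\<in>UNIV. if i = x then b x else 0)"
    by (rule sum.cong) auto
  then show ?thesis by simp
qed

lemma det_col_linear:
  fixes A :: "real^'n^'n"
  shows "det (\<chi> k l. if l = i then b$k else A$k$l) =
    (\<Sum>j\<in>UNIV. b$j * det (\<chi> k l. if l = i then (if k = j then 1 else 0) else A$k$l))"
proof -
  have "det (\<chi> k l. if l = i then b$k else A$k$l) =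
        det (\<chi> l. if l = i then (\<Sum>j\<in>UNIV. b$j *s axis j 1) else column l A)"
    apply (subst det_transpose[symmetric])
    apply (rule arg_cong[where f=det])
    apply (simp add: vec_eq_iff transpose_def column_def axis_def)
    apply auto
    subgoal for k using sum_delta_mult[of "\<lambda>x. b $ x" k] by simp
    done
  also have "\<dots> = (\<Sum>j\<in>UNIV. det (\<chi> l. if l = i then b$j *s axis j 1 else column l A))"
    by (rule det_linear_row_sum) simp
  also have "\<dots> = (\<Sum>j\<in>UNIV. b$j * det (\<chi> l. if l = i then axis j 1 else column l A))"
    by (simp add: det_row_mul)
  also have "\<dots> = (\<Sum>j\<in>UNIV. b$j * det (\<chi> k l. if l = i then (if k = j then 1 else 0) else A$k$l))"
    apply (rule sum.cong[OF refl])
    apply (subst det_transpose[symmetric])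
    apply (rule arg_cong[where f="\<lambda>x. _ * det x"])
    apply (simp add: vec_eq_iff transpose_def column_def axis_def)
    done
  finally show ?thesis .
qed
lemma det_col_row:
  fixes A :: "real^'n^'n"
  shows "det (\<chi> k l. if k = j then (if l = i then 1 else 0) else A$k$l) =
         det (\<chi> k l. if l = i then (if k = j then 1 else 0) else A$k$l)"
  unfolding det_def
proof (rule sum.cong[OF refl])
  fix p assume "p \<in> {p. p permutes (UNIV::'n set)}"
  then have p: "p permutes (UNIV::'n set)" by simp
  have U: "(UNIV::'n set) = insert j (UNIV - {j})" by auto
  have e1: "(\<Prod>k\<in>UNIV. (\<chi> k l. if k = j then (if l = i then 1 else 0) else A$k$l) $ k $ p k)
      = (if p j = i then (\<Prod>k\<in>UNIV-{j}. A$k$p k) else 0)"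
    apply (subst U)
    apply (subst prod.insert)
      apply auto
    done
  have e2: "(\<Prod>k\<in>UNIV. (\<chi> k l. if l = i then (if k = j then 1 else 0) else A$k$l) $ k $ p k)
      = (if p j = i then (\<Prod>k\<in>UNIV-{j}. A$k$p k) else 0)"
  proof (cases "p j = i")
    case True
    have "\<And>k. k \<noteq> j \<Longrightarrow> p k \<noteq> i"
      using True p by (metis permutes_inj injD)
    then show ?thesis
      apply (subst U)
      apply (subst prod.insert)
        apply (auto simp: True intro!: prod.cong)
      done
  next
    case False
    obtain k0 where k0: "p k0 = i" using p by (metis permutes_surj surjD)
    have "k0 \<noteq> j" using k0 False by auto
    have "(\<chi> k l. if l = i then (if k = j then 1 else 0) else A$k$l) $ k0 $ p k0 = (0::real)"
      using k0 \<open>k0 \<noteq> j\<close> by simp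
    note z = this
    have "(\<Prod>k\<in>UNIV. (\<chi> k l. if l = i then (if k = j then 1 else 0) else A$k$l) $ k $ p k) = 0"
      apply (rule prod_zero, simp) apply (rule bexI[of _ k0]) apply (rule z) apply simp done
    then show ?thesis using False by simp
  qed
  show "of_int (sign p) * (\<Prod>k\<in>UNIV. (\<chi> k l. if k = j then (if l = i then 1 else 0) else A$k$l) $ k $ p k)
      = of_int (sign p) * (\<Prod>k\<in>UNIV. (\<chi> k l. if l = i then (if k = j then 1 else 0) else A$k$l) $ k $ p k)"
    using e1 e2 by simp
qed

lemma adj_mult: "adjugate A *v (A *v x) = det A *\<^sub>R x"
proof -
  have "(adjugate A *v b) $ k = det (\<chi> r l. if l = k then b$r else A$r$l)" for b k
  proof -
    have "(adjugate A *v b) $ k = (\<Sum>j\<in>UNIV. b$j * det (\<chi> r l. if r = j then (if l = k then 1 else 0) else A$r$l))"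
      by (simp add: adjugate_def cofactor_def matrix_vector_mult_def transpose_def mult.commute)
    also have "\<dots> = (\<Sum>j\<in>UNIV. b$j * det (\<chi> r l. if l = k then (if r = j then 1 else 0) else A$r$l))"
      by (simp add: det_col_row)
    also have "\<dots> = det (\<chi> r l. if l = k then b$r else A$r$l)"
      by (rule det_col_linear[symmetric])
    finally show ?thesis .
  qed
  then show ?thesis
    by (simp add: vec_eq_iff cramer_lemma mult.commute)
qed



lemma vd_inner_self:
  assumes "(f has_vector_derivative f') (at t within S)"
  shows "((\<lambda>t. f t \<bullet> f t) has_real_derivative 2 * (f t \<bullet> f')) (at t within S)"
proof -
  have "((\<lambda>t. f t \<bullet> f t) has_vector_derivative (f t \<bullet> f' + f' \<bullet> f t)) (at t within S)"
    by (rule bounded_bilinear.has_vector_derivative[OF bounded_bilinear_inner assms assms])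
  then show ?thesis
    by (simp add: has_real_derivative_iff_has_vector_derivative inner_commute)
qed

lemma bl_matvec: "bounded_linear (\<lambda>A::real^'n^'m. A *v x)"
  unfolding linear_conv_bounded_linear[symmetric]
  by (auto simp: linear_iff matrix_vector_mult_def vec_eq_iff algebra_simps sum.distrib sum_distrib_left)

lemma vd_matvec:
  fixes F :: "real \<Rightarrow> real^'n^'m"
  assumes "(F has_vector_derivative M) net"
  shows "((\<lambda>t. F t *v x) has_vector_derivative (M *v x)) net"
  using bounded_linear.has_vector_derivative[OF bl_matvec[of x], of F M net] assms by simp

lemma deriv_nonpos_mono:
  fixes f :: "real \<Rightarrow> real"
  assumes d: "\<And>t. t \<ge> 0 \<Longrightarrow> (f has_real_derivative f' t) (at t within {0..})"
    and n: "\<And>x. s < x \<Longrightarrow> x < t \<Longrightarrow> f' x \<le> 0" and st: "0 \<le> s" "s \<le> t"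
  shows "f t \<le> f s"
proof -
  have c: "continuous_on {0..} f"
    using d by (auto simp: continuous_on_eq_continuous_within intro: DERIV_continuous)
  show ?thesis
  proof (rule DERIV_nonpos_imp_decreasing_open[OF st(2)])
    fix x assume x: "s < x" "x < t"
    then have "at x within {0..} = at x" using st by (intro at_within_interior) auto
    then show "\<exists>y. (f has_real_derivative y) (at x) \<and> y \<le> 0"
      using d[of x] n[of x] x st by auto
  next
    show "continuous_on {s..t} f" by (rule continuous_on_subset[OF c]) (use st in auto)
  qed
qed

lemma mono_bdd_tendsto:
  fixes f :: "real \<Rightarrow> real"
  assumes m: "\<And>s t. 0 \<le> s \<Longrightarrow> s \<le> t \<Longrightarrow> f s \<le> f t" and b: "\<And>t. 0 \<le> t \<Longrightarrow> f t \<le> B"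
  shows "\<exists>L. (f \<longlongrightarrow> L) at_top"
proof -
  let ?L = "Sup (f ` {0..})"
  have bdd: "bdd_above (f ` {0..})" by (rule bdd_aboveI2[where M=B]) (simp add: b)
  have le: "f t \<le> ?L" if "t \<ge> 0" for t using that bdd by (auto intro: cSup_upper)
  have "(f \<longlongrightarrow> ?L) at_top"
  proof (rule increasing_tendsto)
    show "\<forall>\<^sub>F n in at_top. f n \<le> ?L"
      using le by (auto simp: eventually_at_top_linorder intro!: exI[of _ 0])
  next
    fix x assume "x < ?L"
    then obtain t0 where t0: "t0 \<ge> 0" "x < f t0"
      by (subst (asm) less_cSup_iff) (auto simp: bdd)
    then show "\<forall>\<^sub>F n in at_top. x < f n"
      unfolding eventually_at_top_linorder
      by (intro exI[of _ t0]) (auto intro: less_le_trans m)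
  qed
  then show ?thesis by blast
qed

lemma tendsto_det:
  fixes F :: "'b \<Rightarrow> real^'n^'n"
  assumes "(F \<longlongrightarrow> A) net"
  shows "((\<lambda>t. det (F t)) \<longlongrightarrow> det A) net"
  unfolding det_def
  by (intro tendsto_intros assms)

lemma tendsto_adjugate:
  fixes F :: "'b \<Rightarrow> real^'n^'n"
  assumes "(F \<longlongrightarrow> A) net"
  shows "((\<lambda>t. adjugate (F t)) \<longlongrightarrow> adjugate A) net"
  unfolding adjugate_def transpose_def cofactor_def
  apply (intro vec_tendstoI)
  apply simp
  apply (intro tendsto_det vec_tendstoI)
  apply simp
  apply (intro impI tendsto_vec_nth assms)
  done

lemma rank_kernel:
  fixes \<phi> :: "'b \<Rightarrow> real^'q" and \<tau> :: "'q \<Rightarrow> 'b"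
  assumes r: "rank (\<chi> i j. \<phi> (\<tau> j) $ i) = CARD('q)" and v: "\<And>j. \<phi> (\<tau> j) \<bullet> v = 0"
  shows "v = 0"
proof -
  let ?M = "(\<chi> i j. \<phi> (\<tau> j) $ i) :: real^'q^'q"
  have "rank (transpose ?M) = CARD('q)" using r by (simp add: rank_transpose)
  then have inj: "inj ((*v) (transpose ?M))" by (simp add: full_rank_injective)
  have "transpose ?M *v v = 0"
    using v by (simp add: vec_eq_iff matrix_vector_mult_def transpose_def inner_vec_def)
  then show ?thesis using inj by (metis injD matrix_vector_mult_0_right)
qed

lemma det0_kernel:
  fixes A :: "real^'n^'n"
  assumes "det A = 0"
  shows "\<exists>v. v \<noteq> 0 \<and> A *v v = 0"
proof (rule ccontr)
  assume "\<not> ?thesis"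
  then have "\<forall>x. A *v x = 0 \<longrightarrow> x = 0" by auto
  then obtain B where "B ** A = mat 1" using matrix_left_invertible_ker by blast
  then have "invertible A" unfolding invertible_def using matrix_left_right_inverse by blast
  then show False using assms invertible_det_nz by blast
qed

lemma norm_matvec_le: "norm ((A::real^'n^'m) *v x) \<le> (\<Sum>i\<in>UNIV. \<Sum>j\<in>UNIV. \<bar>A $ i $ j\<bar>) * norm x"
proof -
  have "norm (A *v x) \<le> onorm ((*v) A) * norm x"
    by (rule onorm) (simp add:)
  also have "\<dots> \<le> (\<Sum>i\<in>UNIV. \<Sum>j\<in>UNIV. \<bar>A $ i $ j\<bar>) * norm x"
    by (intro mult_right_mono onorm_le_matrix_component_sum) auto
  finally show ?thesis .
qed


lemma outer_step:
  fixes p x :: "real^'n" and P :: "real^'n^'n"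
  shows "(- (c *\<^sub>R (outer p ** P))) *v x = - (c * (p \<bullet> (P *v x))) *\<^sub>R p"
proof -
  have "(- (c *\<^sub>R (outer p ** P))) *v x = - (c *\<^sub>R ((outer p ** P) *v x))"
    by (simp add: vec_eq_iff matrix_vector_mult_def sum_negf sum_distrib_left mult.assoc)
  also have "\<dots> = - (c *\<^sub>R (outer p *v (P *v x)))"
    by (simp add: matrix_vector_mul_assoc)
  finally show ?thesis by (simp add: outer_mult)
qed



lemma ct_part:
  fixes \<theta> :: "real^'q" and \<phi> :: "real \<Rightarrow> real^'q" and d \<gamma>g :: "real \<Rightarrow> real" and \<gamma> :: real
    and \<theta>g0 :: "real^'q" and \<theta>g :: "real \<Rightarrow> real^'q" and \<Phi> :: "real \<Rightarrow> real^'q^'q" and \<theta>h :: "real \<Rightarrow> real^'q"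
  assumes bphi: "bounded (\<phi> ` {0..})" and bd: "bounded (d ` {0..})"
    and rk: "\<exists>\<tau>::'q \<Rightarrow> real. (\<forall>i. \<tau> i > 0) \<and> rank (\<chi> i j. \<phi> (\<tau> j) $ i) = CARD('q)"
    and cg: "continuous_on {0..} \<gamma>g" and gpos: "\<forall>t\<ge>0. \<gamma>g t > 0" and gint: "\<gamma>g integrable_on {0..}"
    and gam: "\<gamma> > 0" and i1: "\<theta>g 0 = \<theta>g0" and i2: "\<Phi> 0 = mat 1"
    and dg: "\<forall>t\<ge>0. (\<theta>g has_vector_derivative
          (- (\<gamma>g t *\<^sub>R (outer (\<phi> t) *v \<theta>g t)) + (\<gamma>g t * (\<phi> t \<bullet> \<theta> + d t)) *\<^sub>R \<phi> t))
          (at t within {0..})"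
    and dP: "\<forall>t\<ge>0. (\<Phi> has_vector_derivative (- (\<gamma>g t *\<^sub>R (outer (\<phi> t) ** \<Phi> t))))
          (at t within {0..})"
    and dh: "\<forall>t\<ge>0. (\<theta>h has_vector_derivative
          (\<gamma> * det (mat 1 - \<Phi> t)) *\<^sub>R
            (adjugate (mat 1 - \<Phi> t) *v (\<theta>g t - \<Phi> t *v \<theta>g0) - det (mat 1 - \<Phi> t) *\<^sub>R \<theta>h t))
          (at t within {0..})"
  shows "bounded ((\<lambda>t. \<theta>h t - \<theta>) ` {0..})"
proof -
  obtain C where C: "C > 0" "\<And>t. t \<ge> 0 \<Longrightarrow> norm (\<phi> t) \<le> C"
    using bphi by (auto simp: bounded_pos)
  obtain Md where Md: "Md > 0" "\<And>t. t \<ge> 0 \<Longrightarrow> \<bar>d t\<bar> \<le> Md"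
    using bd by (auto simp: bounded_pos)
  define G where "G t = integral {0..t} \<gamma>g" for t
  define Gi where "Gi = integral {0..} \<gamma>g"
  have Gd: "(G has_real_derivative \<gamma>g t) (at t within {0..})" if t: "t \<ge> 0" for t
  proof -
    have "((\<lambda>u. integral {0..u} \<gamma>g) has_vector_derivative \<gamma>g t) (at t within {0..t+1})"
      by (rule integral_has_vector_derivative) (use t in \<open>auto intro: continuous_on_subset[OF cg]\<close>)
    moreover have "at t within {0..t+1} = at t within {0..}"
      by (rule at_within_nhd[of _ "{..<t+1}"]) auto
    ultimately show ?thesis
      by (simp add: G_def[abs_def] has_real_derivative_iff_has_vector_derivative)
  qed
  have Gmono: "G s \<le> G t" if "0 \<le> s" "s \<le> t" for s t
    unfolding G_def
  proof (rule integral_subset_le)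
    show "\<gamma>g integrable_on {0..s}" "\<gamma>g integrable_on {0..t}"
      by (rule integrable_continuous_real, rule continuous_on_subset[OF cg], force)+
  qed (use that gpos in auto)
  have Gbd: "G t \<le> Gi" if "0 \<le> t" for t
    unfolding G_def Gi_def
  proof (rule integral_subset_le)
    show "\<gamma>g integrable_on {0..t}"
      by (rule integrable_continuous_real, rule continuous_on_subset[OF cg], force)
  qed (use that gpos gint in auto)
  have G0: "G 0 = 0" by (simp add: G_def)
  have Gnn: "0 \<le> G t" if "0 \<le> t" for t using Gmono[of 0 t] that G0 by simp
  have dPx: "((\<lambda>t. \<Phi> t *v x) has_vector_derivative (- (\<gamma>g t * (\<phi> t \<bullet> (\<Phi> t *v x)))) *\<^sub>R \<phi> t) (at t within {0..})"
    if "t \<ge> 0" for x t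
    using vd_matvec[OF dP[rule_format, OF that], of x] by (simp add: outer_step)
  have Pmono: "norm (\<Phi> t *v x) \<le> norm (\<Phi> s *v x)" if st: "0 \<le> s" "s \<le> t" for x s t
  proof -
    have "(\<lambda>t. (\<Phi> t *v x) \<bullet> (\<Phi> t *v x)) t \<le> (\<lambda>t. (\<Phi> t *v x) \<bullet> (\<Phi> t *v x)) s"
    proof (rule deriv_nonpos_mono[OF _ _ st])
      fix t :: real assume "t \<ge> 0"
      then show "((\<lambda>t. (\<Phi> t *v x) \<bullet> (\<Phi> t *v x)) has_real_derivative
          2 * ((\<Phi> t *v x) \<bullet> ((- (\<gamma>g t * (\<phi> t \<bullet> (\<Phi> t *v x)))) *\<^sub>R \<phi> t))) (at t within {0..})"
        by (rule vd_inner_self[OF dPx])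
    next
      fix y assume "s < y" "y < t"
      then have "\<gamma>g y > 0" using gpos st by auto
      then show "2 * ((\<Phi> y *v x) \<bullet> ((- (\<gamma>g y * (\<phi> y \<bullet> (\<Phi> y *v x)))) *\<^sub>R \<phi> y)) \<le> 0"
        by (simp add: inner_commute)
    qed
    then show ?thesis by (simp add: norm_le)
  qed
  have Pbd: "norm (\<Phi> t *v x) \<le> norm x" if "t \<ge> 0" for t x
    using Pmono[of 0 t x] that i2 by simp
  have Glim: "\<exists>L. (G \<longlongrightarrow> L) at_top"
    by (rule mono_bdd_tendsto[OF Gmono Gbd])
  then obtain LG where LG: "(G \<longlongrightarrow> LG) at_top" by blast
  have ent: "\<exists>l. ((\<lambda>t. \<Phi> t $ i $ j) \<longlongrightarrow> l) at_top" for i j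
  proof -
    define e :: "real^'q" where "e = axis j 1"
    define u where "u t = (\<Phi> t *v e) $ i" for t
    have uP: "u t = \<Phi> t $ i $ j" for t
      by (simp add: u_def e_def matrix_vector_mult_basis column_def)
    define u' where "u' t = (- (\<gamma>g t * (\<phi> t \<bullet> (\<Phi> t *v e)))) * \<phi> t $ i" for t
    have ud: "(u has_real_derivative u' t) (at t within {0..})" if "t \<ge> 0" for t
      using bounded_linear.has_vector_derivative[OF bounded_linear_vec_nth dPx[OF that, of e], of i]
      by (simp add: u_def[abs_def] u'_def has_real_derivative_iff_has_vector_derivative)
    have ne: "norm e = 1" by (simp add: e_def)
    have ubd: "\<bar>u' t\<bar> \<le> \<gamma>g t * C^2" if "t \<ge> 0" for t
    proof -
      have "\<bar>\<phi> t \<bullet> (\<Phi> t *v e)\<bar> \<le> norm (\<phi> t) * norm (\<Phi> t *v e)"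
        by (rule Cauchy_Schwarz_ineq2)
      also have "\<dots> \<le> C * 1"
        using C Pbd[OF that, of e] ne that by (intro mult_mono) auto
      finally have a: "\<bar>\<phi> t \<bullet> (\<Phi> t *v e)\<bar> \<le> C" by simp
      have b: "\<bar>\<phi> t $ i\<bar> \<le> C" using component_le_norm_cart[of "\<phi> t" i] C(2)[OF that] by simp
      have "\<bar>u' t\<bar> = \<gamma>g t * (\<bar>\<phi> t \<bullet> (\<Phi> t *v e)\<bar> * \<bar>\<phi> t $ i\<bar>)"
      proof -
        have "\<bar>\<gamma>g t\<bar> = \<gamma>g t" using gpos that by auto
        then show ?thesis by (simp add: u'_def abs_mult)
      qed
      also have "\<dots> \<le> \<gamma>g t * (C * C)"
        using a b gpos that by (intro mult_left_mono mult_mono) auto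
      finally show ?thesis by (simp add: power2_eq_square)
    qed
    have umono: "u s + C^2 * G s \<le> u t + C^2 * G t" if st: "0 \<le> s" "s \<le> t" for s t
    proof -
      have "(\<lambda>t. - (u t + C^2 * G t)) t \<le> (\<lambda>t. - (u t + C^2 * G t)) s"
      proof (rule deriv_nonpos_mono[OF _ _ st])
        fix t :: real assume t: "t \<ge> 0"
        show "((\<lambda>t. - (u t + C^2 * G t)) has_real_derivative - (u' t + C^2 * \<gamma>g t)) (at t within {0..})"
          by (intro derivative_intros ud Gd t DERIV_cmult)
      next
        fix y assume "s < y" "y < t"
        then have "\<bar>u' y\<bar> \<le> C^2 * \<gamma>g y" using ubd[of y] st by (simp add: mult.commute)
        then show "- (u' y + C^2 * \<gamma>g y) \<le> 0" by linarith
      qed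
      then show ?thesis by simp
    qed
    have uabs: "\<bar>u t\<bar> \<le> 1" if "t \<ge> 0" for t
      using component_le_norm_cart[of "\<Phi> t *v e" i] Pbd[OF that, of e] ne by (simp add: u_def)
    have "\<exists>L. ((\<lambda>t. u t + C^2 * G t) \<longlongrightarrow> L) at_top"
    proof (rule mono_bdd_tendsto[OF umono])
      fix t :: real assume t: "0 \<le> t"
      show "u t + C^2 * G t \<le> 1 + C^2 * Gi"
        using uabs[OF t] Gbd[OF t] by (intro add_mono mult_left_mono) auto
    qed
    then obtain L where L: "((\<lambda>t. u t + C^2 * G t) \<longlongrightarrow> L) at_top" by blast
    have "((\<lambda>t. (u t + C^2 * G t) - C^2 * G t) \<longlongrightarrow> L - C^2 * LG) at_top"
      by (intro tendsto_intros L LG)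
    then show ?thesis by (auto simp: uP)
  qed
  define Pi :: "real^'q^'q" where "Pi = (\<chi> i j. SOME l. ((\<lambda>t. \<Phi> t $ i $ j) \<longlongrightarrow> l) at_top)"
  have Pi: "(\<Phi> \<longlongrightarrow> Pi) at_top"
  proof (intro vec_tendstoI)
    fix i j
    show "((\<lambda>x. \<Phi> x $ i $ j) \<longlongrightarrow> Pi $ i $ j) at_top"
      unfolding Pi_def using someI_ex[OF ent[of i j]] by simp
  qed
  have Pix: "((\<lambda>t. \<Phi> t *v x) \<longlongrightarrow> Pi *v x) at_top" for x
    using bounded_linear.tendsto[OF bl_matvec Pi] .
  have detnz: "det (mat 1 - Pi) \<noteq> 0"
  proof
    assume "det (mat 1 - Pi) = 0"
    then obtain v where v: "v \<noteq> 0" "(mat 1 - Pi) *v v = 0" using det0_kernel by blast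
    then have Piv: "Pi *v v = v" by (simp add: matrix_vector_mult_diff_rdistrib)
    have nconst: "norm (\<Phi> t *v v) = norm v" if t: "t \<ge> 0" for t
    proof (rule antisym)
      show "norm (\<Phi> t *v v) \<le> norm v" using Pbd[OF t] .
      have "norm (Pi *v v) \<le> norm (\<Phi> t *v v)"
      proof (rule tendsto_upperbound[OF tendsto_norm[OF Pix[of v]]])
        show "\<forall>\<^sub>F s in at_top. norm (\<Phi> s *v v) \<le> norm (\<Phi> t *v v)"
          unfolding eventually_at_top_linorder using Pmono t by (intro exI[of _ t]) auto
      qed simp
      then show "norm v \<le> norm (\<Phi> t *v v)" by (simp add: Piv)
    qed
    have orth: "\<phi> t \<bullet> (\<Phi> t *v v) = 0" if t: "t > 0" for t
    proof -
      define H where "H = 2 * ((\<Phi> t *v v) \<bullet> ((- (\<gamma>g t * (\<phi> t \<bullet> (\<Phi> t *v v)))) *\<^sub>R \<phi> t))"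
      have h1: "((\<lambda>t. (\<Phi> t *v v) \<bullet> (\<Phi> t *v v)) has_real_derivative H) (at t within {0..})"
        unfolding H_def using t by (intro vd_inner_self dPx) simp
      have h2: "((\<lambda>s. v \<bullet> v) has_real_derivative H) (at t within {0..})"
      proof (rule has_field_derivative_transform_within[OF h1 zero_less_one])
        show "t \<in> {0..}" using t by simp
        fix s :: real assume "s \<in> {0..}"
        then show "(\<Phi> s *v v) \<bullet> (\<Phi> s *v v) = v \<bullet> v"
          using nconst[of s] by (simp add: dot_square_norm)
      qed
      have "at t within {0..} = at t" using t by (intro at_within_interior) auto
      then have "H = 0" using h2 DERIV_const DERIV_unique by metis
      then have "\<gamma>g t * (\<phi> t \<bullet> (\<Phi> t *v v))^2 = 0"
        by (simp add: H_def inner_commute power2_eq_square)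
      moreover have "\<gamma>g t > 0" using gpos t by auto
      ultimately show ?thesis by simp
    qed
    have Pv: "\<Phi> t *v v = v" if t: "t \<ge> 0" for t
    proof -
      have "(\<Phi> t *v v) $ k = v $ k" for k
      proof -
        define f where "f t = (\<Phi> t *v v) $ k" for t
        define f' where "f' t = (- (\<gamma>g t * (\<phi> t \<bullet> (\<Phi> t *v v)))) * \<phi> t $ k" for t
        have fd: "(f has_real_derivative f' t) (at t within {0..})" if "t \<ge> 0" for t
          using bounded_linear.has_vector_derivative[OF bounded_linear_vec_nth dPx[OF that, of v], of k]
          by (simp add: f_def[abs_def] f'_def has_real_derivative_iff_has_vector_derivative)
        have f'0: "f' y = 0" if "y > 0" for y using orth[OF that] by (simp add: f'_def)
        have "f t \<le> f 0"
          by (rule deriv_nonpos_mono[OF fd]) (use f'0 t in auto)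
        moreover have "(\<lambda>t. - f t) t \<le> (\<lambda>t. - f t) 0"
          by (rule deriv_nonpos_mono[where f'="\<lambda>t. - f' t"]) (use f'0 t fd in \<open>auto intro: derivative_intros\<close>)
        ultimately have "f t = f 0" by simp
        then show ?thesis by (simp add: f_def i2)
      qed
      then show ?thesis by (simp add: vec_eq_iff)
    qed
    obtain \<tau> :: "'q \<Rightarrow> real" where tau: "\<forall>i. \<tau> i > 0" "rank (\<chi> i j. \<phi> (\<tau> j) $ i) = CARD('q)"
      using rk by blast
    have "\<phi> (\<tau> j) \<bullet> v = 0" for j
      using orth[of "\<tau> j"] Pv[of "\<tau> j"] tau(1) by (metis less_imp_le)
    then have "v = 0" by (rule rank_kernel[of \<phi> \<tau>, OF tau(2)])
    then show False using v by simp
  qed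
  define w where "w t = \<theta>g t - \<Phi> t *v \<theta>g0 - \<theta> + \<Phi> t *v \<theta>" for t
  have wd: "(w has_vector_derivative (\<gamma>g t * (d t - \<phi> t \<bullet> w t)) *\<^sub>R \<phi> t) (at t within {0..})"
    if t: "t \<ge> 0" for t
  proof -
    have "(w has_vector_derivative ((- (\<gamma>g t *\<^sub>R (outer (\<phi> t) *v \<theta>g t)) + (\<gamma>g t * (\<phi> t \<bullet> \<theta> + d t)) *\<^sub>R \<phi> t)
        - (- (\<gamma>g t * (\<phi> t \<bullet> (\<Phi> t *v \<theta>g0)))) *\<^sub>R \<phi> t - 0 + (- (\<gamma>g t * (\<phi> t \<bullet> (\<Phi> t *v \<theta>)))) *\<^sub>R \<phi> t))
        (at t within {0..})"
      unfolding w_def[abs_def]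
      by (intro has_vector_derivative_add has_vector_derivative_diff dg[rule_format] dPx t has_vector_derivative_const)
    moreover have "(- (\<gamma>g t *\<^sub>R (outer (\<phi> t) *v \<theta>g t)) + (\<gamma>g t * (\<phi> t \<bullet> \<theta> + d t)) *\<^sub>R \<phi> t)
        - (- (\<gamma>g t * (\<phi> t \<bullet> (\<Phi> t *v \<theta>g0)))) *\<^sub>R \<phi> t - 0 + (- (\<gamma>g t * (\<phi> t \<bullet> (\<Phi> t *v \<theta>)))) *\<^sub>R \<phi> t
        = (\<gamma>g t * (d t - \<phi> t \<bullet> w t)) *\<^sub>R \<phi> t"
      by (simp add: w_def outer_mult inner_diff_right inner_add_right algebra_simps)
    ultimately show ?thesis by simp
  qed
  have w0: "w 0 = 0" by (simp add: w_def i1 i2)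
  define K where "K = 2 * C * Md"
  have Vbd: "w t \<bullet> w t \<le> exp (K * Gi)" if t: "t \<ge> 0" for t
  proof -
    define h where "h t = (1 + w t \<bullet> w t) * exp (- K * G t)" for t
    define h' where "h' t = (0 + 2 * (w t \<bullet> ((\<gamma>g t * (d t - \<phi> t \<bullet> w t)) *\<^sub>R \<phi> t))) * exp (- K * G t)
        + (exp (- K * G t) * (- K * \<gamma>g t)) * (1 + w t \<bullet> w t)" for t
    have hd: "(h has_real_derivative h' t) (at t within {0..})" if "t \<ge> 0" for t
    proof -
      have a: "((\<lambda>t. 1 + w t \<bullet> w t) has_real_derivative (0 + 2 * (w t \<bullet> ((\<gamma>g t * (d t - \<phi> t \<bullet> w t)) *\<^sub>R \<phi> t)))) (at t within {0..})"
        by (intro DERIV_add DERIV_const vd_inner_self wd that)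
      have b: "((\<lambda>t. exp (- K * G t)) has_real_derivative exp (- K * G t) * (- K * \<gamma>g t)) (at t within {0..})"
        using DERIV_chain2[OF DERIV_exp DERIV_cmult[OF Gd[OF that], of "-K"]] by simp
      show ?thesis unfolding h_def[abs_def] h'_def by (rule DERIV_mult[OF a b])
    qed
    have hn: "h' y \<le> 0" if y: "y > 0" for y
    proof -
      let ?a = "\<phi> y \<bullet> w y"
      have g: "\<gamma>g y > 0" using gpos y by auto
      have "\<bar>?a\<bar> \<le> C * norm (w y)"
        using Cauchy_Schwarz_ineq2[of "\<phi> y" "w y"] C(2)[of y] y
        by (meson le_less_trans less_imp_le mult_right_mono norm_ge_zero order_trans)
      then have "\<bar>d y * ?a\<bar> \<le> Md * (C * norm (w y))"
        unfolding abs_mult using Md y by (intro mult_mono) auto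
      moreover have "2 * norm (w y) \<le> 1 + w y \<bullet> w y"
        using sum_squares_bound[of 1 "norm (w y)"]
        by (simp add: dot_square_norm power2_eq_square)
      ultimately have "2 * (d y * ?a) \<le> K * (1 + w y \<bullet> w y)"
      proof -
        assume A: "\<bar>d y * ?a\<bar> \<le> Md * (C * norm (w y))" and Bq: "2 * norm (w y) \<le> 1 + w y \<bullet> w y"
        have "2 * (d y * ?a) \<le> C * Md * (2 * norm (w y))" using A by (simp add: algebra_simps)
        also have "\<dots> \<le> C * Md * (1 + w y \<bullet> w y)" using Bq C Md by (intro mult_left_mono) auto
        also have "\<dots> \<le> K * (1 + w y \<bullet> w y)" unfolding K_def using C Md
          by (intro mult_right_mono) (auto intro: add_nonneg_nonneg)
        finally show ?thesis .
      qed
      then have "2 * (\<gamma>g y * (d y - ?a) * ?a) \<le> \<gamma>g y * (K * (1 + w y \<bullet> w y))"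
      proof -
        assume A: "2 * (d y * ?a) \<le> K * (1 + w y \<bullet> w y)"
        have "2 * (\<gamma>g y * (d y - ?a) * ?a) = \<gamma>g y * (2 * (d y * ?a)) - 2 * (\<gamma>g y * ?a^2)"
          by (simp add: algebra_simps power2_eq_square)
        also have "\<dots> \<le> \<gamma>g y * (2 * (d y * ?a))" using g by simp
        also have "\<dots> \<le> \<gamma>g y * (K * (1 + w y \<bullet> w y))" using A g by (intro mult_left_mono) auto
        finally show ?thesis .
      qed
      then have "2 * (w y \<bullet> ((\<gamma>g y * (d y - ?a)) *\<^sub>R \<phi> y)) + (1 + w y \<bullet> w y) * (- K * \<gamma>g y) \<le> 0"
        by (simp add: inner_commute algebra_simps)
      then have "exp (- K * G y) * (2 * (w y \<bullet> ((\<gamma>g y * (d y - ?a)) *\<^sub>R \<phi> y)) + (1 + w y \<bullet> w y) * (- K * \<gamma>g y)) \<le> 0"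
        by (simp add: mult_nonneg_nonpos)
      then show ?thesis by (simp add: h'_def algebra_simps)
    qed
    have "h t \<le> h 0" by (rule deriv_nonpos_mono[OF hd]) (use hn t in auto)
    then have "(1 + w t \<bullet> w t) * exp (- K * G t) \<le> 1" by (simp add: h_def w0 G0)
    then have "1 + w t \<bullet> w t \<le> exp (K * G t)"
      by (simp add: exp_minus field_simps)
    also have "\<dots> \<le> exp (K * Gi)"
      using Gbd[OF t] C Md by (simp add: K_def)
    finally show ?thesis by simp
  qed
  define Wn where "Wn = sqrt (exp (K * Gi))"
  have wn: "norm (w t) \<le> Wn" if "t \<ge> 0" for t
    using Vbd[OF that] unfolding Wn_def by (simp add: norm_eq_sqrt_inner)
  define Di where "Di = mat 1 - Pi"
  define Ai where "Ai = (\<Sum>i\<in>UNIV. \<Sum>j\<in>UNIV. \<bar>adjugate Di $ i $ j\<bar>)"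
  have Dlim: "((\<lambda>t. mat 1 - \<Phi> t) \<longlongrightarrow> Di) at_top"
    unfolding Di_def by (intro tendsto_intros Pi)
  have detlim: "((\<lambda>t. \<bar>det (mat 1 - \<Phi> t)\<bar>) \<longlongrightarrow> \<bar>det Di\<bar>) at_top"
    by (intro tendsto_intros tendsto_det Dlim)
  have adjlim: "((\<lambda>t. \<Sum>i\<in>UNIV. \<Sum>j\<in>UNIV. \<bar>adjugate (mat 1 - \<Phi> t) $ i $ j\<bar>) \<longlongrightarrow> Ai) at_top"
    unfolding Ai_def by (intro tendsto_intros tendsto_vec_nth tendsto_adjugate Dlim)
  define \<delta> where "\<delta> = \<bar>det Di\<bar> / 2"
  have \<delta>: "\<delta> > 0" using detnz by (simp add: \<delta>_def Di_def)
  have ev: "\<forall>\<^sub>F t in at_top. \<delta> < \<bar>det (mat 1 - \<Phi> t)\<bar> \<and> \<bar>det (mat 1 - \<Phi> t)\<bar> < \<bar>det Di\<bar> + 1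
      \<and> (\<Sum>i\<in>UNIV. \<Sum>j\<in>UNIV. \<bar>adjugate (mat 1 - \<Phi> t) $ i $ j\<bar>) < Ai + 1"
  proof -
    have "\<delta> < \<bar>det Di\<bar>" using \<delta> by (simp add: \<delta>_def)
    then have e1: "\<forall>\<^sub>F t in at_top. \<delta> < \<bar>det (mat 1 - \<Phi> t)\<bar>" by (rule order_tendstoD(1)[OF detlim])
    have e2: "\<forall>\<^sub>F t in at_top. \<bar>det (mat 1 - \<Phi> t)\<bar> < \<bar>det Di\<bar> + 1" by (rule order_tendstoD(2)[OF detlim]) simp
    have e3: "\<forall>\<^sub>F t in at_top. (\<Sum>i\<in>UNIV. \<Sum>j\<in>UNIV. \<bar>adjugate (mat 1 - \<Phi> t) $ i $ j\<bar>) < Ai + 1"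
      by (rule order_tendstoD(2)[OF adjlim]) simp
    show ?thesis by (rule eventually_conj[OF e1 eventually_conj[OF e2 e3]])
  qed
  then obtain T0 where T0: "\<And>t. t \<ge> T0 \<Longrightarrow> \<delta> < \<bar>det (mat 1 - \<Phi> t)\<bar> \<and> \<bar>det (mat 1 - \<Phi> t)\<bar> < \<bar>det Di\<bar> + 1
      \<and> (\<Sum>i\<in>UNIV. \<Sum>j\<in>UNIV. \<bar>adjugate (mat 1 - \<Phi> t) $ i $ j\<bar>) < Ai + 1"
    unfolding eventually_at_top_linorder by blast
  define T where "T = max T0 0"
  have T: "T \<ge> 0" "T \<ge> T0" by (auto simp: T_def)
  define e where "e t = \<theta>h t - \<theta>" for t
  define Dl where "Dl t = det (mat 1 - \<Phi> t)" for t
  define Ad where "Ad t = adjugate (mat 1 - \<Phi> t)" for t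
  have ed: "(e has_vector_derivative (\<gamma> * Dl t) *\<^sub>R (Ad t *v w t - Dl t *\<^sub>R e t)) (at t within {0..})"
    if t: "t \<ge> 0" for t
  proof -
    have eq: "\<theta>g t - \<Phi> t *v \<theta>g0 = w t + (mat 1 - \<Phi> t) *v \<theta>"
      by (simp add: w_def matrix_vector_mult_diff_rdistrib)
    have "Ad t *v (\<theta>g t - \<Phi> t *v \<theta>g0) - Dl t *\<^sub>R \<theta>h t = Ad t *v w t - Dl t *\<^sub>R e t"
    proof -
      have "Ad t *v (w t + (mat 1 - \<Phi> t) *v \<theta>) = Ad t *v w t + Dl t *\<^sub>R \<theta>"
        unfolding Ad_def Dl_def by (simp only: matrix_vector_right_distrib adj_mult)
      then show ?thesis unfolding eq e_def by (simp add: algebra_simps)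
    qed
    then show ?thesis
      using dh[rule_format, OF t] unfolding e_def[abs_def] Ad_def Dl_def
      by (simp add: has_vector_derivative_diff_const)
  qed
  define B where "B = (\<bar>det Di\<bar> + 1) * ((Ai + 1) * Wn)"
  define c0 where "c0 = B^2 / \<delta>^4"
  define a where "a = \<gamma> * \<delta>^2"
  have c0nn: "c0 \<ge> 0" unfolding c0_def using \<delta> by simp
  have Wn0: "Wn \<ge> 0" unfolding Wn_def by simp
  have Ai0: "Ai \<ge> 0" unfolding Ai_def by (intro sum_nonneg) auto
  have key: "(2 * (e y \<bullet> ((\<gamma> * Dl y) *\<^sub>R (Ad y *v w y - Dl y *\<^sub>R e y))) + a * (e y \<bullet> e y - c0)) \<le> 0"
    if y: "y \<ge> T" for y
  proof -
    have y0: "y \<ge> 0" using y T by linarith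
    have Ty: "\<delta> < \<bar>Dl y\<bar>" "\<bar>Dl y\<bar> < \<bar>det Di\<bar> + 1"
      "(\<Sum>i\<in>UNIV. \<Sum>j\<in>UNIV. \<bar>Ad y $ i $ j\<bar>) < Ai + 1"
      using T0[of y] y T by (auto simp: Dl_def Ad_def)
    define n where "n = norm (e y)"
    have n0: "n \<ge> 0" by (simp add: n_def)
    have V: "e y \<bullet> e y = n^2" by (simp add: n_def dot_square_norm)
    have aw: "norm (Ad y *v w y) \<le> (Ai + 1) * Wn"
    proof -
      have "norm (Ad y *v w y) \<le> (\<Sum>i\<in>UNIV. \<Sum>j\<in>UNIV. \<bar>Ad y $ i $ j\<bar>) * norm (w y)"
        by (rule norm_matvec_le)
      also have "\<dots> \<le> (Ai + 1) * Wn"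
        using Ty(3) wn[OF y0] Ai0 by (intro mult_mono) (auto intro: sum_nonneg)
      finally show ?thesis .
    qed
    have s1: "Dl y * (e y \<bullet> (Ad y *v w y)) \<le> B * n"
    proof -
      have "Dl y * (e y \<bullet> (Ad y *v w y)) \<le> \<bar>Dl y\<bar> * \<bar>e y \<bullet> (Ad y *v w y)\<bar>"
        by (simp add: abs_mult[symmetric])
      also have "\<dots> \<le> (\<bar>det Di\<bar> + 1) * ((Ai + 1) * Wn * n)"
      proof (rule mult_mono)
        have "\<bar>e y \<bullet> (Ad y *v w y)\<bar> \<le> n * norm (Ad y *v w y)"
          unfolding n_def by (rule Cauchy_Schwarz_ineq2)
        also have "\<dots> \<le> n * ((Ai + 1) * Wn)" using aw n0 by (intro mult_left_mono) auto
        finally show "\<bar>e y \<bullet> (Ad y *v w y)\<bar> \<le> (Ai + 1) * Wn * n" by (simp add: mult.commute)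
      qed (use Ty in auto)
      finally show ?thesis by (simp add: B_def mult.assoc)
    qed
    have s2: "\<delta>^2 * n^2 \<le> (Dl y)^2 * n^2"
      using Ty(1) \<delta> by (intro mult_right_mono) (simp_all add: abs_le_square_iff[symmetric])
    have sq: "2 * B * n \<le> \<delta>^2 * n^2 + B^2 / \<delta>^2"
    proof -
      have "0 \<le> (\<delta> * n - B / \<delta>)^2" by simp
      also have "\<dots> = \<delta>^2 * n^2 - 2 * B * n + B^2 / \<delta>^2"
        using \<delta> by (simp add: power2_eq_square field_simps)
      finally show ?thesis by simp
    qed
    have c0e: "\<delta>^2 * c0 = B^2 / \<delta>^2" using \<delta> by (simp add: c0_def field_simps power2_eq_square power4_eq_xxxx)
    have "2 * (e y \<bullet> ((\<gamma> * Dl y) *\<^sub>R (Ad y *v w y - Dl y *\<^sub>R e y))) + a * (e y \<bullet> e y - c0)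
        = \<gamma> * (2 * (Dl y * (e y \<bullet> (Ad y *v w y))) - 2 * ((Dl y)^2 * n^2) + \<delta>^2 * n^2 - \<delta>^2 * c0)"
      unfolding a_def V[symmetric] by (simp add: inner_diff_right algebra_simps power2_eq_square)
    also have "\<dots> \<le> \<gamma> * (2 * (B * n) - 2 * (\<delta>^2 * n^2) + \<delta>^2 * n^2 - B^2 / \<delta>^2)"
      using s1 s2 c0e gam by (intro mult_left_mono) auto
    also have "\<dots> \<le> 0" using sq gam by (intro mult_nonneg_nonpos) auto
    finally show ?thesis .
  qed
  have tail: "e t \<bullet> e t \<le> c0 + e T \<bullet> e T" if t: "t \<ge> T" for t
  proof -
    define h where "h t = (e t \<bullet> e t - c0) * exp (a * t)" for t
    define h' where "h' t = (2 * (e t \<bullet> ((\<gamma> * Dl t) *\<^sub>R (Ad t *v w t - Dl t *\<^sub>R e t))) - 0) * exp (a * t)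
        + (exp (a * t) * (a * 1)) * (e t \<bullet> e t - c0)" for t
    have hd: "(h has_real_derivative h' t) (at t within {0..})" if "t \<ge> 0" for t
    proof -
      have p: "((\<lambda>t. e t \<bullet> e t - c0) has_real_derivative (2 * (e t \<bullet> ((\<gamma> * Dl t) *\<^sub>R (Ad t *v w t - Dl t *\<^sub>R e t))) - 0)) (at t within {0..})"
        by (intro DERIV_diff DERIV_const vd_inner_self ed that)
      have q: "((\<lambda>t. exp (a * t)) has_real_derivative exp (a * t) * (a * 1)) (at t within {0..})"
        using DERIV_chain2[OF DERIV_exp DERIV_cmult[OF DERIV_ident, of a]] by simp
      show ?thesis unfolding h_def[abs_def] h'_def by (rule DERIV_mult[OF p q])
    qed
    have hn: "h' y \<le> 0" if "T < y" for y
    proof -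
      have "h' y = exp (a * y) * (2 * (e y \<bullet> ((\<gamma> * Dl y) *\<^sub>R (Ad y *v w y - Dl y *\<^sub>R e y))) + a * (e y \<bullet> e y - c0))"
        by (simp add: h'_def algebra_simps)
      also have "\<dots> \<le> 0" using key[of y] that by (intro mult_nonneg_nonpos) auto
      finally show ?thesis .
    qed
    have "h t \<le> h T" by (rule deriv_nonpos_mono[OF hd]) (use hn t T in auto)
    then have hh: "(e t \<bullet> e t - c0) * exp (a * t) \<le> (e T \<bullet> e T - c0) * exp (a * T)" by (simp add: h_def)
    show ?thesis
    proof (cases "e t \<bullet> e t - c0 \<le> 0")
      case True then show ?thesis using inner_ge_zero[of "e T"] by linarith
    next
      case False
      have "exp (a * T) \<le> exp (a * t)" using t gam \<delta> by (simp add: a_def)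
      then have "(e t \<bullet> e t - c0) * exp (a * T) \<le> (e t \<bullet> e t - c0) * exp (a * t)"
        using False by (intro mult_left_mono) auto
      then have "(e t \<bullet> e t - c0) * exp (a * T) \<le> (e T \<bullet> e T - c0) * exp (a * T)" using hh by linarith
      then show ?thesis using c0nn by simp
    qed
  qed
  have ce: "continuous_on {0..} e"
    by (rule continuous_on_vector_derivative) (use ed in auto)
  have b1: "bounded (e ` {0..T})"
    by (intro compact_imp_bounded compact_continuous_image continuous_on_subset[OF ce]) auto
  have b2: "bounded (e ` {T..})"
    unfolding bounded_iff
  proof (intro exI ballI)
    fix x assume "x \<in> e ` {T..}"
    then obtain t where t: "t \<ge> T" "x = e t" by auto
    show "norm x \<le> sqrt (c0 + e T \<bullet> e T)"
      using tail[OF t(1)] t(2) by (simp add: norm_eq_sqrt_inner)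
  qed
  have "{0..} = {0..T} \<union> {T..}" using T by auto
  then have "e ` {0..} = e ` {0..T} \<union> e ` {T..}" by auto
  then have "bounded (e ` {0..})" using b1 b2 by simp
  then show ?thesis by (simp add: e_def[abs_def])
qed


lemma Amul: "(mat 1 - c *\<^sub>R outer p) *v x = x - (c * (p \<bullet> x)) *\<^sub>R p"
  by (simp add: matrix_vector_mult_diff_rdistrib scaleR_matrix_vector_assoc[symmetric] outer_mult)

lemma dt_part:
  fixes \<theta> :: "real^'q" and \<phi> :: "nat \<Rightarrow> real^'q" and d \<gamma>g :: "nat \<Rightarrow> real" and \<gamma> :: real
    and \<theta>g0 :: "real^'q" and \<theta>g :: "nat \<Rightarrow> real^'q" and \<Phi> :: "nat \<Rightarrow> real^'q^'q" and \<theta>h :: "nat \<Rightarrow> real^'q"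
  assumes bphi: "bounded (range \<phi>)" and bd: "bounded (range d)"
    and rk: "\<exists>\<tau>::'q \<Rightarrow> nat. rank (\<chi> i j. \<phi> (\<tau> j) $ i) = CARD('q)"
    and gpos: "\<forall>k. \<gamma>g k > 0" and gs: "summable (\<lambda>k. 1 / \<gamma>g k)"
    and gam: "\<gamma> > 0" and i1: "\<theta>g 0 = \<theta>g0" and i2: "\<Phi> 0 = mat 1"
    and rg: "\<forall>k. \<theta>g (Suc k) =
          (mat 1 - (1 / (\<gamma>g k + (norm (\<phi> k))\<^sup>2)) *\<^sub>R outer (\<phi> k)) *v \<theta>g k
          + ((1 / (\<gamma>g k + (norm (\<phi> k))\<^sup>2)) * (\<phi> k \<bullet> \<theta> + d k)) *\<^sub>R \<phi> k"
    and rP: "\<forall>k. \<Phi> (Suc k) =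
          (mat 1 - (1 / (\<gamma>g k + (norm (\<phi> k))\<^sup>2)) *\<^sub>R outer (\<phi> k)) ** \<Phi> k"
    and rh: "\<forall>k. \<theta>h (Suc k) = \<theta>h k +
          (det (mat 1 - \<Phi> k) / (\<gamma> + (det (mat 1 - \<Phi> k))\<^sup>2)) *\<^sub>R
            (adjugate (mat 1 - \<Phi> k) *v (\<theta>g k - \<Phi> k *v \<theta>g0) - det (mat 1 - \<Phi> k) *\<^sub>R \<theta>h k)"
  shows "bounded (range (\<lambda>k. \<theta>h k - \<theta>))"
proof -
  obtain C where C: "C > 0" "\<And>k. norm (\<phi> k) \<le> C"
    using bphi by (auto simp: bounded_pos)
  obtain Md where Md: "Md > 0" "\<And>k. \<bar>d k\<bar> \<le> Md"
    using bd by (auto simp: bounded_pos)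
  define g where "g k = 1 / (\<gamma>g k + (norm (\<phi> k))\<^sup>2)" for k
  have gp: "g k > 0" for k using gpos[rule_format, of k] by (simp add: g_def add_pos_nonneg)
  have gphi: "g k * (norm (\<phi> k))^2 \<le> 1" for k
  proof -
    have "0 < \<gamma>g k + (norm (\<phi> k))\<^sup>2" using gpos[rule_format, of k] by (simp add: add_pos_nonneg)
    then show ?thesis using gpos[rule_format, of k] by (simp add: g_def divide_le_eq_1)
  qed
  have gle: "g k \<le> 1 / \<gamma>g k" for k
    using gpos[rule_format, of k] by (simp add: g_def frac_le)
  have PS: "\<Phi> (Suc k) *v x = \<Phi> k *v x - (g k * (\<phi> k \<bullet> (\<Phi> k *v x))) *\<^sub>R \<phi> k" for k x
    using rP by (simp add: g_def[symmetric] matrix_vector_mul_assoc[symmetric] Amul)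
  have contr: "(y - (g k * (\<phi> k \<bullet> y)) *\<^sub>R \<phi> k) \<bullet> (y - (g k * (\<phi> k \<bullet> y)) *\<^sub>R \<phi> k)
      \<le> y \<bullet> y - g k * (\<phi> k \<bullet> y)^2" for k y
  proof -
    let ?a = "\<phi> k \<bullet> y"
    have "(y - (g k * ?a) *\<^sub>R \<phi> k) \<bullet> (y - (g k * ?a) *\<^sub>R \<phi> k)
        = y \<bullet> y - 2 * g k * ?a^2 + (g k * ?a)^2 * (norm (\<phi> k))^2"
      using dot_square_norm[of "\<phi> k"]
      by (simp add: inner_diff_left inner_diff_right inner_commute power2_eq_square algebra_simps)
    also have "(g k * ?a)^2 * (norm (\<phi> k))^2 = (g k * ?a^2) * (g k * (norm (\<phi> k))^2)"
      by (simp add: power2_eq_square algebra_simps)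
    also have "\<dots> \<le> g k * ?a^2" using gphi[of k] gp[of k]
      by (intro mult_left_le) auto
    finally show ?thesis by simp
  qed
  have Pstep: "(\<Phi> (Suc k) *v x) \<bullet> (\<Phi> (Suc k) *v x) \<le> (\<Phi> k *v x) \<bullet> (\<Phi> k *v x) - g k * (\<phi> k \<bullet> (\<Phi> k *v x))^2" for k x
    unfolding PS by (rule contr)
  have Pstep': "norm (\<Phi> (Suc k) *v x) \<le> norm (\<Phi> k *v x)" for k x
  proof -
    have "(\<Phi> (Suc k) *v x) \<bullet> (\<Phi> (Suc k) *v x) \<le> (\<Phi> k *v x) \<bullet> (\<Phi> k *v x)"
      using Pstep[of k x] gp[of k] by (smt (verit) mult_nonneg_nonneg zero_le_power2)
    then show ?thesis by (simp add: norm_le)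
  qed
  have Pmono: "m \<le> n \<Longrightarrow> norm (\<Phi> n *v x) \<le> norm (\<Phi> m *v x)" for m n x
    by (rule lift_Suc_antimono_le[of "\<lambda>k. norm (\<Phi> k *v x)"]) (use Pstep' in auto)
  have Pbd: "norm (\<Phi> k *v x) \<le> norm x" for k x
    using Pmono[of 0 k x] i2 by simp
  have ent: "\<exists>l. ((\<lambda>k. \<Phi> k $ i $ j) \<longlongrightarrow> l) sequentially" for i j
  proof -
    define e :: "real^'q" where "e = axis j 1"
    define u where "u k = (\<Phi> k *v e) $ i" for k
    have uP: "u k = \<Phi> k $ i $ j" for k
      by (simp add: u_def e_def matrix_vector_mult_basis column_def)
    have ne: "norm e = 1" by (simp add: e_def)
    have ubd: "norm (u (Suc k) - u k) \<le> C^2 * (1 / \<gamma>g k)" for k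
    proof -
      have "u (Suc k) - u k = - (g k * (\<phi> k \<bullet> (\<Phi> k *v e))) * \<phi> k $ i"
        by (simp add: u_def PS)
      moreover have "\<bar>\<phi> k \<bullet> (\<Phi> k *v e)\<bar> \<le> C"
      proof -
        have "\<bar>\<phi> k \<bullet> (\<Phi> k *v e)\<bar> \<le> norm (\<phi> k) * norm (\<Phi> k *v e)"
          by (rule Cauchy_Schwarz_ineq2)
        also have "\<dots> \<le> C * 1"
          using C Pbd[of k e] ne by (intro mult_mono) auto
        finally show ?thesis by simp
      qed
      moreover have "\<bar>\<phi> k $ i\<bar> \<le> C" using component_le_norm_cart[of "\<phi> k" i] C(2)[of k] by simp
      ultimately have "norm (u (Suc k) - u k) \<le> g k * (C * C)"
        using gp[of k] by (simp add: abs_mult mult_mono)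
      also have "\<dots> \<le> (1 / \<gamma>g k) * (C * C)" using gle[of k] by (intro mult_right_mono) auto
      finally show ?thesis by (simp add: power2_eq_square mult.commute)
    qed
    have sm: "summable (\<lambda>k. u (Suc k) - u k)"
      by (rule summable_comparison_test'[OF _ ubd]) (intro summable_mult gs)
    have "(\<lambda>n. \<Sum>k<n. u (Suc k) - u k) \<longlonglongrightarrow> (\<Sum>k. u (Suc k) - u k)"
      by (rule summable_LIMSEQ[OF sm])
    then have "(\<lambda>n. u 0 + (\<Sum>k<n. u (Suc k) - u k)) \<longlonglongrightarrow> u 0 + (\<Sum>k. u (Suc k) - u k)"
      by (intro tendsto_intros)
    moreover have "u 0 + (\<Sum>k<n. u (Suc k) - u k) = u n" for n
      by (simp add: sum_lessThan_telescope)
    ultimately show ?thesis by (auto simp: uP)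
  qed
  define Pi :: "real^'q^'q" where "Pi = (\<chi> i j. SOME l. ((\<lambda>k. \<Phi> k $ i $ j) \<longlongrightarrow> l) sequentially)"
  have Pi: "\<Phi> \<longlonglongrightarrow> Pi"
  proof (intro vec_tendstoI)
    fix i j
    show "((\<lambda>x. \<Phi> x $ i $ j) \<longlongrightarrow> Pi $ i $ j) sequentially"
      unfolding Pi_def using someI_ex[OF ent[of i j]] by simp
  qed
  have Pix: "(\<lambda>k. \<Phi> k *v x) \<longlonglongrightarrow> Pi *v x" for x
    using bounded_linear.tendsto[OF bl_matvec Pi] .
  have detnz: "det (mat 1 - Pi) \<noteq> 0"
  proof
    assume "det (mat 1 - Pi) = 0"
    then obtain v where v: "v \<noteq> 0" "(mat 1 - Pi) *v v = 0" using det0_kernel by blast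
    then have Piv: "Pi *v v = v" by (simp add: matrix_vector_mult_diff_rdistrib)
    have nconst: "norm (\<Phi> k *v v) = norm v" for k
    proof (rule antisym)
      show "norm (\<Phi> k *v v) \<le> norm v" using Pbd .
      have "norm (Pi *v v) \<le> norm (\<Phi> k *v v)"
      proof (rule tendsto_upperbound[OF tendsto_norm[OF Pix[of v]]])
        show "\<forall>\<^sub>F s in sequentially. norm (\<Phi> s *v v) \<le> norm (\<Phi> k *v v)"
          unfolding eventually_sequentially using Pmono by blast
      qed simp
      then show "norm v \<le> norm (\<Phi> k *v v)" by (simp add: Piv)
    qed
    have orth: "\<phi> k \<bullet> (\<Phi> k *v v) = 0" for k
    proof -
      have "g k * (\<phi> k \<bullet> (\<Phi> k *v v))^2 \<le> 0"
        using Pstep[of k v] nconst[of k] nconst[of "Suc k"] by (simp add: dot_square_norm)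
      then have "(\<phi> k \<bullet> (\<Phi> k *v v))^2 \<le> 0" using gp[of k]
        by (simp add: mult_le_0_iff)
      then show ?thesis by simp
    qed
    have Pv: "\<Phi> k *v v = v" for k
    proof (induction k)
      case (Suc k)
      then show ?case using orth[of k] by (simp add: PS)
    qed (simp add: i2)
    obtain \<tau> :: "'q \<Rightarrow> nat" where tau: "rank (\<chi> i j. \<phi> (\<tau> j) $ i) = CARD('q)"
      using rk by blast
    have "\<phi> (\<tau> j) \<bullet> v = 0" for j
      using orth[of "\<tau> j"] Pv[of "\<tau> j"] by simp
    then have "v = 0" by (rule rank_kernel[of \<phi> \<tau>, OF tau])
    then show False using v by simp
  qed
  define w where "w k = \<theta>g k - \<Phi> k *v \<theta>g0 - \<theta> + \<Phi> k *v \<theta>" for k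
  have wS: "w (Suc k) = (w k - (g k * (\<phi> k \<bullet> w k)) *\<^sub>R \<phi> k) + (g k * d k) *\<^sub>R \<phi> k" for k
  proof -
    have "\<theta>g (Suc k) = \<theta>g k - (g k * (\<phi> k \<bullet> \<theta>g k)) *\<^sub>R \<phi> k + (g k * (\<phi> k \<bullet> \<theta> + d k)) *\<^sub>R \<phi> k"
      using rg by (simp add: g_def[symmetric] Amul)
    then show ?thesis
      by (simp add: w_def PS inner_diff_right inner_add_right algebra_simps)
  qed
  have w0: "w 0 = 0" by (simp add: w_def i1 i2)
  define Ws where "Ws = Md * C * (\<Sum>k. 1 / \<gamma>g k)"
  have wn: "norm (w k) \<le> Md * C * (\<Sum>m<k. 1 / \<gamma>g m)" for k
  proof (induction k)
    case 0 then show ?case by (simp add: w0)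
  next
    case (Suc k)
    have a: "norm (w k - (g k * (\<phi> k \<bullet> w k)) *\<^sub>R \<phi> k) \<le> norm (w k)"
      using contr[where k=k and y="w k"] gp[of k] by (simp add: norm_le) (smt (verit) mult_nonneg_nonneg zero_le_power2)
    have b: "norm ((g k * d k) *\<^sub>R \<phi> k) \<le> Md * C * (1 / \<gamma>g k)"
    proof -
      have "norm ((g k * d k) *\<^sub>R \<phi> k) = g k * (\<bar>d k\<bar> * norm (\<phi> k))"
        using gp[of k] by (simp add: abs_mult)
      also have "\<dots> \<le> (1 / \<gamma>g k) * (Md * C)"
        using gle[of k] Md C gp[of k] gpos[rule_format, of k] by (intro mult_mono) (auto intro: mult_mono)
      finally show ?thesis by (simp add: mult.commute)
    qed
    have "norm (w (Suc k)) \<le> norm (w k) + Md * C * (1 / \<gamma>g k)"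
      unfolding wS using norm_triangle_ineq[of "w k - (g k * (\<phi> k \<bullet> w k)) *\<^sub>R \<phi> k" "(g k * d k) *\<^sub>R \<phi> k"] a b
      by linarith
    then show ?case using Suc by (simp add: algebra_simps)
  qed
  have wn': "norm (w k) \<le> Ws" for k
  proof -
    have "(\<Sum>m<k. 1 / \<gamma>g m) \<le> (\<Sum>m. 1 / \<gamma>g m)"
      by (rule sum_le_suminf[OF gs]) (use gpos in \<open>auto intro: less_imp_le\<close>)
    then show ?thesis using wn[of k] Md C unfolding Ws_def
      by (meson order_trans mult_left_mono mult_pos_pos less_imp_le)
  qed
  define Di where "Di = mat 1 - Pi"
  define Ai where "Ai = (\<Sum>i\<in>UNIV. \<Sum>j\<in>UNIV. \<bar>adjugate Di $ i $ j\<bar>)"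
  have Dlim: "(\<lambda>k. mat 1 - \<Phi> k) \<longlonglongrightarrow> Di"
    unfolding Di_def by (intro tendsto_intros Pi)
  have detlim: "(\<lambda>k. \<bar>det (mat 1 - \<Phi> k)\<bar>) \<longlonglongrightarrow> \<bar>det Di\<bar>"
    by (intro tendsto_intros tendsto_det Dlim)
  have adjlim: "(\<lambda>k. \<Sum>i\<in>UNIV. \<Sum>j\<in>UNIV. \<bar>adjugate (mat 1 - \<Phi> k) $ i $ j\<bar>) \<longlonglongrightarrow> Ai"
    unfolding Ai_def by (intro tendsto_intros tendsto_vec_nth tendsto_adjugate Dlim)
  define \<delta> where "\<delta> = \<bar>det Di\<bar> / 2"
  have \<delta>: "\<delta> > 0" using detnz by (simp add: \<delta>_def Di_def)
  have ev: "\<forall>\<^sub>F k in sequentially. \<delta> < \<bar>det (mat 1 - \<Phi> k)\<bar> \<and> \<bar>det (mat 1 - \<Phi> k)\<bar> < \<bar>det Di\<bar> + 1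
      \<and> (\<Sum>i\<in>UNIV. \<Sum>j\<in>UNIV. \<bar>adjugate (mat 1 - \<Phi> k) $ i $ j\<bar>) < Ai + 1"
  proof -
    have "\<delta> < \<bar>det Di\<bar>" using \<delta> by (simp add: \<delta>_def)
    then have e1: "\<forall>\<^sub>F k in sequentially. \<delta> < \<bar>det (mat 1 - \<Phi> k)\<bar>" by (rule order_tendstoD(1)[OF detlim])
    have e2: "\<forall>\<^sub>F k in sequentially. \<bar>det (mat 1 - \<Phi> k)\<bar> < \<bar>det Di\<bar> + 1" by (rule order_tendstoD(2)[OF detlim]) simp
    have e3: "\<forall>\<^sub>F k in sequentially. (\<Sum>i\<in>UNIV. \<Sum>j\<in>UNIV. \<bar>adjugate (mat 1 - \<Phi> k) $ i $ j\<bar>) < Ai + 1"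
      by (rule order_tendstoD(2)[OF adjlim]) simp
    show ?thesis by (rule eventually_conj[OF e1 eventually_conj[OF e2 e3]])
  qed
  then obtain T where T: "\<And>k. k \<ge> T \<Longrightarrow> \<delta> < \<bar>det (mat 1 - \<Phi> k)\<bar> \<and> \<bar>det (mat 1 - \<Phi> k)\<bar> < \<bar>det Di\<bar> + 1
      \<and> (\<Sum>i\<in>UNIV. \<Sum>j\<in>UNIV. \<bar>adjugate (mat 1 - \<Phi> k) $ i $ j\<bar>) < Ai + 1"
    unfolding eventually_sequentially by blast
  define e where "e k = \<theta>h k - \<theta>" for k
  define Dl where "Dl k = det (mat 1 - \<Phi> k)" for k
  define Ad where "Ad k = adjugate (mat 1 - \<Phi> k)" for k
  have eS: "e (Suc k) = (\<gamma> / (\<gamma> + (Dl k)^2)) *\<^sub>R e k + (Dl k / (\<gamma> + (Dl k)^2)) *\<^sub>R (Ad k *v w k)" for k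
  proof -
    have eq: "\<theta>g k - \<Phi> k *v \<theta>g0 = w k + (mat 1 - \<Phi> k) *v \<theta>"
      by (simp add: w_def matrix_vector_mult_diff_rdistrib)
    have "Ad k *v (\<theta>g k - \<Phi> k *v \<theta>g0) - Dl k *\<^sub>R \<theta>h k = Ad k *v w k - Dl k *\<^sub>R e k"
    proof -
      have "Ad k *v (w k + (mat 1 - \<Phi> k) *v \<theta>) = Ad k *v w k + Dl k *\<^sub>R \<theta>"
        unfolding Ad_def Dl_def by (simp only: matrix_vector_right_distrib adj_mult)
      then show ?thesis unfolding eq e_def by (simp add: algebra_simps)
    qed
    note idt = this
    have r: "\<theta>h (Suc k) = \<theta>h k + (Dl k / (\<gamma> + (Dl k)^2)) *\<^sub>R (Ad k *v (\<theta>g k - \<Phi> k *v \<theta>g0) - Dl k *\<^sub>R \<theta>h k)"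
      unfolding Dl_def Ad_def by (rule rh[rule_format])
    have "e (Suc k) = e k + (Dl k / (\<gamma> + (Dl k)^2)) *\<^sub>R (Ad k *v w k - Dl k *\<^sub>R e k)"
      unfolding e_def unfolding r idt[unfolded e_def] by (simp add: algebra_simps)
    also have "\<dots> = (1 - Dl k * Dl k / (\<gamma> + (Dl k)^2)) *\<^sub>R e k + (Dl k / (\<gamma> + (Dl k)^2)) *\<^sub>R (Ad k *v w k)"
      by (simp add: algebra_simps)
    also have "1 - Dl k * Dl k / (\<gamma> + (Dl k)^2) = \<gamma> / (\<gamma> + (Dl k)^2)"
    proof -
      have "\<gamma> + (Dl k)^2 > 0" using gam by (simp add: add_pos_nonneg)
      then show ?thesis by (simp add: field_simps power2_eq_square)
    qed
    finally show ?thesis .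
  qed
  define \<rho> where "\<rho> = \<gamma> / (\<gamma> + \<delta>^2)"
  have \<rho>: "0 < \<rho>" "\<rho> < 1"
  proof -
    have p: "\<gamma> + \<delta>^2 > 0" "\<delta>^2 > 0" using gam \<delta> by (simp_all add: add_pos_pos)
    show "0 < \<rho>" unfolding \<rho>_def using gam p by (intro divide_pos_pos)
    show "\<rho> < 1" unfolding \<rho>_def by (subst divide_less_eq_1_pos[OF p(1)]) (use p in linarith)
  qed
  define Bd where "Bd = (\<bar>det Di\<bar> + 1) / \<gamma> * ((Ai + 1) * Ws)"
  have Ai0: "Ai \<ge> 0" unfolding Ai_def by (intro sum_nonneg) auto
  have Ws0: "Ws \<ge> 0" using wn'[of 0] norm_ge_zero order_trans by blast
  have estep: "norm (e (Suc k)) \<le> \<rho> * norm (e k) + Bd" if k: "k \<ge> T" for k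
  proof -
    have Ty: "\<delta> < \<bar>Dl k\<bar>" "\<bar>Dl k\<bar> < \<bar>det Di\<bar> + 1"
      "(\<Sum>i\<in>UNIV. \<Sum>j\<in>UNIV. \<bar>Ad k $ i $ j\<bar>) < Ai + 1"
      using T[OF k] by (auto simp: Dl_def Ad_def)
    have pos: "\<gamma> + (Dl k)^2 > 0" using gam by (simp add: add_pos_nonneg)
    have sq: "\<delta>^2 \<le> (Dl k)^2" using Ty(1) \<delta> by (simp add: abs_le_square_iff[symmetric])
    have c1: "\<gamma> / (\<gamma> + (Dl k)^2) \<le> \<rho>"
      unfolding \<rho>_def using gam \<delta> sq by (intro divide_left_mono) (auto simp: add_pos_nonneg intro: mult_pos_pos)
    have c2: "\<bar>Dl k\<bar> / (\<gamma> + (Dl k)^2) \<le> (\<bar>det Di\<bar> + 1) / \<gamma>"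
    proof -
      have "\<bar>Dl k\<bar> / (\<gamma> + (Dl k)^2) \<le> \<bar>Dl k\<bar> / \<gamma>"
        using gam pos by (intro divide_left_mono) (auto intro: mult_pos_pos)
      also have "\<dots> \<le> (\<bar>det Di\<bar> + 1) / \<gamma>" using Ty(2) gam by (intro divide_right_mono) auto
      finally show ?thesis .
    qed
    have aw: "norm (Ad k *v w k) \<le> (Ai + 1) * Ws"
    proof -
      have "norm (Ad k *v w k) \<le> (\<Sum>i\<in>UNIV. \<Sum>j\<in>UNIV. \<bar>Ad k $ i $ j\<bar>) * norm (w k)"
        by (rule norm_matvec_le)
      also have "\<dots> \<le> (Ai + 1) * Ws"
        using Ty(3) wn'[of k] Ai0 by (intro mult_mono) (auto intro: sum_nonneg)
      finally show ?thesis .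
    qed
    have "norm (e (Suc k)) \<le> norm ((\<gamma> / (\<gamma> + (Dl k)^2)) *\<^sub>R e k) + norm ((Dl k / (\<gamma> + (Dl k)^2)) *\<^sub>R (Ad k *v w k))"
      unfolding eS by (rule norm_triangle_ineq)
    also have "norm ((\<gamma> / (\<gamma> + (Dl k)^2)) *\<^sub>R e k) = (\<gamma> / (\<gamma> + (Dl k)^2)) * norm (e k)"
      using gam pos by simp
    also have "norm ((Dl k / (\<gamma> + (Dl k)^2)) *\<^sub>R (Ad k *v w k)) = (\<bar>Dl k\<bar> / (\<gamma> + (Dl k)^2)) * norm (Ad k *v w k)"
      using pos by simp
    also have "(\<gamma> / (\<gamma> + (Dl k)^2)) * norm (e k) + (\<bar>Dl k\<bar> / (\<gamma> + (Dl k)^2)) * norm (Ad k *v w k)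
        \<le> \<rho> * norm (e k) + Bd"
      unfolding Bd_def using c1 c2 aw pos gam
      by (intro add_mono mult_right_mono mult_mono) (auto intro: divide_nonneg_pos)
    finally show ?thesis .
  qed
  define M where "M = max (norm (e T)) (Bd / (1 - \<rho>))"
  have tail: "norm (e k) \<le> M" if "k \<ge> T" for k
    using that
  proof (induction k rule: dec_induct)
    case base then show ?case by (simp add: M_def)
  next
    case (step k)
    have a: "norm (e (Suc k)) \<le> \<rho> * norm (e k) + Bd" using estep step(1) by blast
    have b: "\<rho> * norm (e k) \<le> \<rho> * M" using step(3) \<rho> by (intro mult_left_mono) auto
    have "Bd / (1 - \<rho>) \<le> M" by (simp add: M_def)
    then have c: "Bd \<le> (1 - \<rho>) * M" using \<rho> by (simp add: field_simps)
    show ?case using a b c by (simp add: algebra_simps)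
  qed
  have b1: "bounded (e ` {..<T})" by (intro finite_imp_bounded) auto
  have b2: "bounded (e ` {T..})"
    unfolding bounded_iff using tail by (intro exI[of _ M]) auto
  have u: "{..<T} \<union> {T..} = (UNIV::nat set)" by auto
  have "range e = e ` {..<T} \<union> e ` {T..}" by (metis image_Un u)
  then have "bounded (range e)" using b1 b2 by simp
  then show ?thesis by (simp add: e_def[abs_def])
qed


theorem proposition4:
  fixes \<theta> :: "real^'q"
  shows
  "(\<forall>(\<phi>::real \<Rightarrow> real^'q) (d::real \<Rightarrow> real) (\<gamma>g::real \<Rightarrow> real) (\<gamma>::real)
      (\<theta>g0::real^'q) (\<theta>g::real \<Rightarrow> real^'q) (\<Phi>::real \<Rightarrow> real^'q^'q) (\<theta>h::real \<Rightarrow> real^'q).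
      continuous_on {0..} \<phi> \<and> bounded (\<phi> ` {0..}) \<and> bounded (d ` {0..}) \<and>
      (\<exists>\<tau>::'q \<Rightarrow> real. (\<forall>i. \<tau> i > 0) \<and> rank (\<chi> i j. \<phi> (\<tau> j) $ i) = CARD('q)) \<and>
      continuous_on {0..} \<gamma>g \<and> (\<forall>t\<ge>0. \<gamma>g t > 0) \<and> \<gamma>g integrable_on {0..} \<and>
      \<gamma> > 0 \<and>
      \<theta>g 0 = \<theta>g0 \<and> \<Phi> 0 = mat 1 \<and>
      (\<forall>t\<ge>0. (\<theta>g has_vector_derivative
          (- (\<gamma>g t *\<^sub>R (outer (\<phi> t) *v \<theta>g t)) + (\<gamma>g t * (\<phi> t \<bullet> \<theta> + d t)) *\<^sub>R \<phi> t))
          (at t within {0..})) \<and>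
      (\<forall>t\<ge>0. (\<Phi> has_vector_derivative (- (\<gamma>g t *\<^sub>R (outer (\<phi> t) ** \<Phi> t))))
          (at t within {0..})) \<and>
      (\<forall>t\<ge>0. (\<theta>h has_vector_derivative
          (\<gamma> * det (mat 1 - \<Phi> t)) *\<^sub>R
            (adjugate (mat 1 - \<Phi> t) *v (\<theta>g t - \<Phi> t *v \<theta>g0) - det (mat 1 - \<Phi> t) *\<^sub>R \<theta>h t))
          (at t within {0..}))
      \<longrightarrow> bounded ((\<lambda>t. \<theta>h t - \<theta>) ` {0..}))
   \<and>
   (\<forall>(\<phi>::nat \<Rightarrow> real^'q) (d::nat \<Rightarrow> real) (\<gamma>g::nat \<Rightarrow> real) (\<gamma>::real)
      (\<theta>g0::real^'q) (\<theta>g::nat \<Rightarrow> real^'q) (\<Phi>::nat \<Rightarrow> real^'q^'q) (\<theta>h::nat \<Rightarrow> real^'q).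
      bounded (range \<phi>) \<and> bounded (range d) \<and>
      (\<exists>\<tau>::'q \<Rightarrow> nat. rank (\<chi> i j. \<phi> (\<tau> j) $ i) = CARD('q)) \<and>
      (\<forall>k. \<gamma>g k > 0) \<and> summable (\<lambda>k. 1 / \<gamma>g k) \<and>
      \<gamma> > 0 \<and>
      \<theta>g 0 = \<theta>g0 \<and> \<Phi> 0 = mat 1 \<and>
      (\<forall>k. \<theta>g (Suc k) =
          (mat 1 - (1 / (\<gamma>g k + (norm (\<phi> k))\<^sup>2)) *\<^sub>R outer (\<phi> k)) *v \<theta>g k
          + ((1 / (\<gamma>g k + (norm (\<phi> k))\<^sup>2)) * (\<phi> k \<bullet> \<theta> + d k)) *\<^sub>R \<phi> k) \<and>
      (\<forall>k. \<Phi> (Suc k) =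
          (mat 1 - (1 / (\<gamma>g k + (norm (\<phi> k))\<^sup>2)) *\<^sub>R outer (\<phi> k)) ** \<Phi> k) \<and>
      (\<forall>k. \<theta>h (Suc k) = \<theta>h k +
          (det (mat 1 - \<Phi> k) / (\<gamma> + (det (mat 1 - \<Phi> k))\<^sup>2)) *\<^sub>R
            (adjugate (mat 1 - \<Phi> k) *v (\<theta>g k - \<Phi> k *v \<theta>g0) - det (mat 1 - \<Phi> k) *\<^sub>R \<theta>h k))
      \<longrightarrow> bounded (range (\<lambda>k. \<theta>h k - \<theta>)))"
  (is "?A \<and> ?B")
proof
  show ?A
  proof (intro allI impI)
    fix \<phi> :: "real \<Rightarrow> real^'q" and d \<gamma>g :: "real \<Rightarrow> real" and \<gamma> :: real and \<theta>g0 :: "real^'q"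
      and \<theta>g :: "real \<Rightarrow> real^'q" and \<Phi> :: "real \<Rightarrow> real^'q^'q" and \<theta>h :: "real \<Rightarrow> real^'q"
    assume H: "continuous_on {0..} \<phi> \<and> bounded (\<phi> ` {0..}) \<and> bounded (d ` {0..}) \<and>
      (\<exists>\<tau>::'q \<Rightarrow> real. (\<forall>i. \<tau> i > 0) \<and> rank (\<chi> i j. \<phi> (\<tau> j) $ i) = CARD('q)) \<and>
      continuous_on {0..} \<gamma>g \<and> (\<forall>t\<ge>0. \<gamma>g t > 0) \<and> \<gamma>g integrable_on {0..} \<and>
      \<gamma> > 0 \<and>
      \<theta>g 0 = \<theta>g0 \<and> \<Phi> 0 = mat 1 \<and>
      (\<forall>t\<ge>0. (\<theta>g has_vector_derivative
          (- (\<gamma>g t *\<^sub>R (outer (\<phi> t) *v \<theta>g t)) + (\<gamma>g t * (\<phi> t \<bullet> \<theta> + d t)) *\<^sub>R \<phi> t))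
          (at t within {0..})) \<and>
      (\<forall>t\<ge>0. (\<Phi> has_vector_derivative (- (\<gamma>g t *\<^sub>R (outer (\<phi> t) ** \<Phi> t))))
          (at t within {0..})) \<and>
      (\<forall>t\<ge>0. (\<theta>h has_vector_derivative
          (\<gamma> * det (mat 1 - \<Phi> t)) *\<^sub>R
            (adjugate (mat 1 - \<Phi> t) *v (\<theta>g t - \<Phi> t *v \<theta>g0) - det (mat 1 - \<Phi> t) *\<^sub>R \<theta>h t))
          (at t within {0..}))"
    show "bounded ((\<lambda>t. \<theta>h t - \<theta>) ` {0..})"
      using H apply (elim conjE) apply (rule ct_part) apply assumption+ done
  qed
next
  show ?B
  proof (intro allI impI)
    fix \<phi> :: "nat \<Rightarrow> real^'q" and d \<gamma>g :: "nat \<Rightarrow> real" and \<gamma> :: real and \<theta>g0 :: "real^'q"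
      and \<theta>g :: "nat \<Rightarrow> real^'q" and \<Phi> :: "nat \<Rightarrow> real^'q^'q" and \<theta>h :: "nat \<Rightarrow> real^'q"
    assume H: "bounded (range \<phi>) \<and> bounded (range d) \<and>
      (\<exists>\<tau>::'q \<Rightarrow> nat. rank (\<chi> i j. \<phi> (\<tau> j) $ i) = CARD('q)) \<and>
      (\<forall>k. \<gamma>g k > 0) \<and> summable (\<lambda>k. 1 / \<gamma>g k) \<and>
      \<gamma> > 0 \<and>
      \<theta>g 0 = \<theta>g0 \<and> \<Phi> 0 = mat 1 \<and>
      (\<forall>k. \<theta>g (Suc k) =
          (mat 1 - (1 / (\<gamma>g k + (norm (\<phi> k))\<^sup>2)) *\<^sub>R outer (\<phi> k)) *v \<theta>g k
          + ((1 / (\<gamma>g k + (norm (\<phi> k))\<^sup>2)) * (\<phi> k \<bullet> \<theta> + d k)) *\<^sub>R \<phi> k) \<and>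
      (\<forall>k. \<Phi> (Suc k) =
          (mat 1 - (1 / (\<gamma>g k + (norm (\<phi> k))\<^sup>2)) *\<^sub>R outer (\<phi> k)) ** \<Phi> k) \<and>
      (\<forall>k. \<theta>h (Suc k) = \<theta>h k +
          (det (mat 1 - \<Phi> k) / (\<gamma> + (det (mat 1 - \<Phi> k))\<^sup>2)) *\<^sub>R
            (adjugate (mat 1 - \<Phi> k) *v (\<theta>g k - \<Phi> k *v \<theta>g0) - det (mat 1 - \<Phi> k) *\<^sub>R \<theta>h k))"
    show "bounded (range (\<lambda>k. \<theta>h k - \<theta>))"
      using H apply (elim conjE) apply (rule dt_part) apply assumption+ done
  qed
qed

end
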